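(* Let $G$ be a closed, connected, self adjoint, noncompact subgroup of $GL(n,\mathbb{R})$ and let $v\in\mathbb{R}^n$ be nonzero. Then $\lambda^-(v)\ge -M(v)$.
   Context: $\langle A,B\rangle=\mathrm{trace}(AB^t)$, $|A|^2=\langle A,A\rangle$. $\mathfrak{G}$ is the Lie algebra of $G$, $\mathfrak{K}$ and $\mathfrak{P}$ its skew-symmetric and symmetric elements, $\mathfrak{G}_v=\{X\in\mathfrak{G}:X(v)=0\}$, $\widetilde{\mathfrak{P}_v}=(\mathfrak{K}+\mathfrak{G}_v)^\perp$ in $\mathfrak{G}$. For nonzero $X\in\mathfrak{P}$: $\lambda_X(v)$ (resp. $\mu_X(v)$) is the largest (resp. smallest) eigenvalue $\lambda$ of $X$ such that $v$ has a nonzero component in the $\lambda$-eigenspace of $X$. $\lambda^-(v)=\inf\{\lambda_X(v):X\in\widetilde{\mathfrak{P}_v},|X|=1\}$ (with $\inf\emptyset=+\infty$), and the Hilbert–Mumford function is $M(v)=\sup\{\mu_X(v):X\in\mathfrak{P},|X|=1\}$. *)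

theory Defs
  imports "HOL-Analysis.Analysis"
begin

primrec mpow :: "real^'n^'n \<Rightarrow> nat \<Rightarrow> real^'n^'n" where
  "mpow X 0 = mat 1"
| "mpow X (Suc k) = X ** mpow X k"

definition mexp :: "real^'n^'n \<Rightarrow> real^'n^'n" where
  "mexp X = (\<Sum>k. (1 / fact k) *\<^sub>R mpow X k)"

definition minner :: "real^'n^'n \<Rightarrow> real^'n^'n \<Rightarrow> real" where
  "minner A B = trace (A ** transpose B)"

definition mnorm :: "real^'n^'n \<Rightarrow> real" where
  "mnorm A = sqrt (minner A A)"

definition GL_subgroup :: "(real^'n^'n) set \<Rightarrow> bool" where
  "GL_subgroup G \<longleftrightarrow> G \<subseteq> {A. invertible A} \<and> mat 1 \<in> G
     \<and> (\<forall>A\<in>G. \<forall>B\<in>G. A ** B \<in> G) \<and> (\<forall>A\<in>G. matrix_inv A \<in> G)"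

definition lie_alg :: "(real^'n^'n) set \<Rightarrow> (real^'n^'n) set" where
  "lie_alg G = {X. \<forall>t::real. mexp (t *\<^sub>R X) \<in> G}"

definition lie_K :: "(real^'n^'n) set \<Rightarrow> (real^'n^'n) set" where
  "lie_K G = {X \<in> lie_alg G. transpose X = - X}"

definition lie_P :: "(real^'n^'n) set \<Rightarrow> (real^'n^'n) set" where
  "lie_P G = {X \<in> lie_alg G. transpose X = X}"

definition lie_stab :: "(real^'n^'n) set \<Rightarrow> real^'n \<Rightarrow> (real^'n^'n) set" where
  "lie_stab G v = {X \<in> lie_alg G. X *v v = 0}"

definition P_tilde :: "(real^'n^'n) set \<Rightarrow> real^'n \<Rightarrow> (real^'n^'n) set" where
  "P_tilde G v = {X \<in> lie_alg G. \<forall>K\<in>lie_K G. \<forall>H\<in>lie_stab G v. minner X (K + H) = 0}"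

definition eigenspace :: "real^'n^'n \<Rightarrow> real \<Rightarrow> (real^'n) set" where
  "eigenspace X l = {w. X *v w = l *\<^sub>R w}"

text \<open>Eigenvalues l of X such that v has nonzero component (orthogonal projection)
  in the l-eigenspace of X.\<close>
definition supp_eig :: "real^'n^'n \<Rightarrow> real^'n \<Rightarrow> real set" where
  "supp_eig X v = {l. (\<exists>w. w \<noteq> 0 \<and> X *v w = l *\<^sub>R w) \<and> closest_point (eigenspace X l) v \<noteq> 0}"

definition lambda_X :: "real^'n^'n \<Rightarrow> real^'n \<Rightarrow> real" where
  "lambda_X X v = Max (supp_eig X v)"

definition mu_X :: "real^'n^'n \<Rightarrow> real^'n \<Rightarrow> real" where
  "mu_X X v = Min (supp_eig X v)"

definition lambda_minus :: "(real^'n^'n) set \<Rightarrow> real^'n \<Rightarrow> ereal" where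
  "lambda_minus G v = Inf {ereal (lambda_X X v) | X. X \<in> P_tilde G v \<and> mnorm X = 1}"

definition HM :: "(real^'n^'n) set \<Rightarrow> real^'n \<Rightarrow> ereal" where
  "HM G v = Sup {ereal (mu_X X v) | X. X \<in> lie_P G \<and> mnorm X = 1}"

end

theory Submission
  imports Defs
begin

lemma exp_nat_mult_gen:
  fixes x :: "'a::{real_normed_algebra_1,banach}"
  shows "exp (of_nat n * x) = exp x ^ n"
proof (induction n)
  case 0 then show ?case by simp
next
  case (Suc n)
  have "of_nat (Suc n) * x = x + of_nat n * x" by (simp add: distrib_right)
  moreover have "x * (of_nat n * x) = (of_nat n * x) * x"
    by (metis mult.assoc mult_of_nat_commute)
  ultimately show ?case using Suc by (simp add: exp_add_commuting)
qed

lemma telescope_pow: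
  fixes P Q :: "'a::real_normed_algebra_1"
  assumes "norm P \<le> c" "norm Q \<le> c"
  shows "norm (P ^ Suc n - Q ^ Suc n) \<le> real (Suc n) * norm (P - Q) * c ^ n"
proof (induction n)
  case 0 then show ?case by simp
next
  case (Suc n)
  have c0: "0 \<le> c" using assms(1) norm_ge_zero order_trans by blast
  have eq: "P ^ Suc (Suc n) - Q ^ Suc (Suc n) = P * (P ^ Suc n - Q ^ Suc n) + (P - Q) * Q ^ Suc n"
    by (simp add: algebra_simps)
  have "norm (P * (P ^ Suc n - Q ^ Suc n)) \<le> c * (real (Suc n) * norm (P - Q) * c ^ n)"
    by (rule order_trans[OF norm_mult_ineq]) (intro mult_mono assms Suc, auto simp: c0)
  moreover have "norm ((P - Q) * Q ^ Suc n) \<le> norm (P - Q) * c ^ Suc n"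
  proof -
    have "norm (Q ^ Suc n) \<le> c ^ Suc n"
      by (rule order_trans[OF norm_power_ineq]) (intro power_mono assms, simp)
    then show ?thesis
      using norm_mult_ineq[of "P - Q" "Q ^ Suc n"] mult_left_mono[of "norm (Q ^ Suc n)" "c ^ Suc n" "norm (P - Q)"]
      by auto
  qed
  ultimately have "norm (P ^ Suc (Suc n) - Q ^ Suc (Suc n)) \<le>
      c * (real (Suc n) * norm (P - Q) * c ^ n) + norm (P - Q) * c ^ Suc n"
    unfolding eq by (metis add_mono norm_triangle_ineq order_trans)
  also have "\<dots> = real (Suc (Suc n)) * norm (P - Q) * c ^ Suc n"
    by (simp add: algebra_simps)
  finally show ?case .
qed

lemma trotter_deriv0:
  fixes A B :: "'a::{real_normed_algebra_1,banach}"
  defines "f \<equiv> \<lambda>t::real. exp (t *\<^sub>R A) * exp (t *\<^sub>R B) - exp (t *\<^sub>R (A + B))"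
  shows "((\<lambda>t. norm (f t) / \<bar>t\<bar>) \<longlongrightarrow> 0) (at 0)"
proof -
  have "(f has_vector_derivative
      (exp (0 *\<^sub>R A) * (exp (0 *\<^sub>R B) * B) + (exp (0 *\<^sub>R A) * A) * exp (0 *\<^sub>R B)
        - exp (0 *\<^sub>R (A + B)) * (A + B))) (at 0)"
    unfolding f_def
    by (intro has_vector_derivative_diff has_vector_derivative_mult exp_scaleR_has_vector_derivative_right)
  then have "(f has_vector_derivative 0) (at 0)" by (simp add: algebra_simps)
  then have "(f has_derivative (\<lambda>x. 0)) (at 0)" by (simp add: has_vector_derivative_def)
  then have "((\<lambda>y. norm (f y - f 0 - 0) / norm (y - 0)) \<longlongrightarrow> 0) (at 0)"
    by (simp add: has_derivative_iff_norm)
  moreover have "f 0 = 0" by (simp add: f_def)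
  ultimately show ?thesis by simp
qed

lemma trotter:
  fixes A B :: "'a::{real_normed_algebra_1,banach}"
  shows "(\<lambda>k. (exp (inverse (real (Suc k)) *\<^sub>R A) * exp (inverse (real (Suc k)) *\<^sub>R B)) ^ Suc k)
           \<longlonglongrightarrow> exp (A + B)"
proof -
  define f where "f \<equiv> \<lambda>t::real. exp (t *\<^sub>R A) * exp (t *\<^sub>R B) - exp (t *\<^sub>R (A + B))"
  define h where "h \<equiv> \<lambda>k::nat. inverse (real (Suc k))"
  define C where "C = exp (norm A + norm B)"
  have lim0: "((\<lambda>t. norm (f t) / \<bar>t\<bar>) \<longlongrightarrow> 0) (at 0)"
    unfolding f_def by (rule trotter_deriv0)
  have hlim: "filterlim h (at 0) sequentially"
    unfolding filterlim_at h_def using LIMSEQ_inverse_real_of_nat by auto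
  have l2: "(\<lambda>k. norm (f (h k)) / \<bar>h k\<bar>) \<longlonglongrightarrow> 0"
    using filterlim_compose[OF lim0 hlim] by (simp add: o_def)
  have l3: "(\<lambda>k. C * (norm (f (h k)) / \<bar>h k\<bar>)) \<longlonglongrightarrow> 0"
    using tendsto_mult_right_zero[OF l2] by simp
  define P where "P \<equiv> \<lambda>k. exp (h k *\<^sub>R A) * exp (h k *\<^sub>R B)"
  define Q where "Q \<equiv> \<lambda>k. exp (h k *\<^sub>R (A + B))"
  have bound: "norm (P k ^ Suc k - exp (A + B)) \<le> C * (norm (f (h k)) / \<bar>h k\<bar>)" for k
  proof -
    define c where "c = exp (h k * (norm A + norm B))"
    have hpos: "h k > 0" by (simp add: h_def)
    have QE: "Q k ^ Suc k = exp (A + B)"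
    proof -
      have o: "(of_nat (Suc k) :: 'a) * of_real (h k) = 1"
      proof -
        have "(of_nat (Suc k) :: 'a) = of_real (real (Suc k))" by simp
        then have "(of_nat (Suc k) :: 'a) * of_real (h k) = of_real (real (Suc k) * h k)"
          by (simp only: of_real_mult)
        also have "real (Suc k) * h k = 1" by (simp add: h_def)
        finally show ?thesis by simp
      qed
      have "of_nat (Suc k) * (h k *\<^sub>R (A + B)) = A + B"
        by (simp add: scaleR_conv_of_real mult.assoc[symmetric] o del: of_nat_Suc)
      then show ?thesis unfolding Q_def by (metis exp_nat_mult_gen)
    qed
    have nP: "norm (P k) \<le> c"
    proof -
      have "norm (P k) \<le> norm (exp (h k *\<^sub>R A)) * norm (exp (h k *\<^sub>R B))"
        unfolding P_def by (rule norm_mult_ineq)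
      also have "\<dots> \<le> exp (norm (h k *\<^sub>R A)) * exp (norm (h k *\<^sub>R B))"
        by (intro mult_mono norm_exp) auto
      also have "\<dots> = c" using hpos by (simp add: c_def exp_add[symmetric] algebra_simps)
      finally show ?thesis .
    qed
    have nQ: "norm (Q k) \<le> c"
    proof -
      have "norm (Q k) \<le> exp (norm (h k *\<^sub>R (A + B)))" unfolding Q_def by (rule norm_exp)
      also have "\<dots> \<le> c" using hpos unfolding c_def
        by (simp add: norm_triangle_ineq mult_left_mono)
      finally show ?thesis .
    qed
    have cpow: "c ^ k \<le> C"
    proof -
      have "c ^ k \<le> c ^ Suc k"
        by (rule power_increasing) (auto simp: c_def hpos less_imp_le)
      also have "c ^ Suc k = exp (real (Suc k) * (h k * (norm A + norm B)))"
        unfolding c_def by (simp only: exp_of_nat_mult[symmetric] of_nat_id)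
      also have "real (Suc k) * (h k * (norm A + norm B)) = norm A + norm B"
        by (simp add: h_def)
      also have "exp (norm A + norm B) = C" by (simp add: C_def)
      finally show ?thesis .
    qed
    have "norm (P k ^ Suc k - Q k ^ Suc k) \<le> real (Suc k) * norm (P k - Q k) * c ^ k"
      by (rule telescope_pow[OF nP nQ])
    also have "\<dots> \<le> real (Suc k) * norm (P k - Q k) * C"
      by (intro mult_left_mono cpow) auto
    also have "real (Suc k) * norm (P k - Q k) = norm (f (h k)) / \<bar>h k\<bar>"
    proof -
      have a: "\<bar>h k\<bar> = inverse (real (Suc k))" using hpos by (simp add: h_def)
      have "P k - Q k = f (h k)" by (simp add: P_def Q_def f_def)
      then show ?thesis unfolding a by (simp add: divide_inverse del: of_nat_Suc)
    qed
    finally show ?thesis using QE by (metis mult.commute)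
  qed
  have "(\<lambda>k. P k ^ Suc k - exp (A + B)) \<longlonglongrightarrow> 0"
    by (rule Lim_null_comparison[OF _ l3]) (rule always_eventually, rule allI, rule bound)
  then have "(\<lambda>k. P k ^ Suc k) \<longlonglongrightarrow> exp (A + B)" by (rule LIM_zero_cancel)
  then show ?thesis by (simp add: P_def h_def)
qed

typedef (overloaded) 'a endo = "UNIV :: ('a::euclidean_space \<Rightarrow>\<^sub>L 'a) set"
  morphisms Rep_endo Abs_endo by simp

setup_lifting type_definition_endo

instantiation endo :: (euclidean_space) real_normed_vector
begin

lift_definition norm_endo :: "'a endo \<Rightarrow> real" is norm .
lift_definition minus_endo :: "'a endo \<Rightarrow> 'a endo \<Rightarrow> 'a endo" is "(-)" .
lift_definition uminus_endo :: "'a endo \<Rightarrow> 'a endo" is "uminus" .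
lift_definition zero_endo :: "'a endo" is 0 .
lift_definition plus_endo :: "'a endo \<Rightarrow> 'a endo \<Rightarrow> 'a endo" is "(+)" .
lift_definition scaleR_endo :: "real \<Rightarrow> 'a endo \<Rightarrow> 'a endo" is scaleR .

definition dist_endo :: "'a endo \<Rightarrow> 'a endo \<Rightarrow> real"
  where "dist_endo a b = norm (a - b)"

definition uniformity_endo :: "('a endo \<times> 'a endo) filter"
  where "uniformity_endo = (INF e\<in>{0 <..}. principal {(x, y). dist x y < e})"

definition open_endo :: "'a endo set \<Rightarrow> bool"
  where "open_endo S = (\<forall>x\<in>S. \<forall>\<^sub>F (x', y) in uniformity. x' = x \<longrightarrow> y \<in> S)"

definition sgn_endo :: "'a endo \<Rightarrow> 'a endo"
  where "sgn_endo x = scaleR (inverse (norm x)) x"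

instance
  apply standard
  unfolding dist_endo_def open_endo_def sgn_endo_def uniformity_endo_def
  apply (rule refl | (transfer, force simp: norm_triangle_ineq algebra_simps))+
  done
end

lemma norm_Rep_endo: "norm (Rep_endo x) = norm x" by transfer simp
lemma Rep_endo_diff: "Rep_endo (x - y) = Rep_endo x - Rep_endo y" by transfer simp
lemma Rep_endo_plus: "Rep_endo (x + y) = Rep_endo x + Rep_endo y" by transfer simp
lemma Rep_endo_scaleR: "Rep_endo (r *\<^sub>R x) = r *\<^sub>R Rep_endo x" by transfer simp
lemma Abs_endo_diff: "Abs_endo (x - y) = Abs_endo x - Abs_endo y" by transfer simp

instance endo :: (euclidean_space) banach
proof
  fix X :: "nat \<Rightarrow> 'a endo"
  assume "Cauchy X"
  then have "Cauchy (\<lambda>n. Rep_endo (X n))"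
    unfolding Cauchy_def dist_norm by (simp add: Rep_endo_diff[symmetric] norm_Rep_endo)
  then obtain L where L: "(\<lambda>n. Rep_endo (X n)) \<longlonglongrightarrow> L"
    using convergent_eq_Cauchy convergent_def by blast
  have "X \<longlonglongrightarrow> Abs_endo L"
    using L unfolding LIMSEQ_iff
    by (metis Abs_endo_inverse Rep_endo_diff UNIV_I norm_Rep_endo)
  then show "convergent X" by (auto simp: convergent_def)
qed

instantiation endo :: (euclidean_space) real_normed_algebra_1
begin
lift_definition one_endo :: "'a endo" is id_blinfun .
lift_definition times_endo :: "'a endo \<Rightarrow> 'a endo \<Rightarrow> 'a endo" is "(o\<^sub>L)" .
instance
proof
  fix a b c :: "'a endo" and r :: real
  show "a * b * c = a * (b * c)" by transfer (rule blinfun_eqI, simp)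
  show "1 * a = a" by transfer (rule blinfun_eqI, simp)
  show "a * 1 = a" by transfer (rule blinfun_eqI, simp)
  show "(a + b) * c = a * c + b * c" by transfer (rule blinfun_eqI, simp add: blinfun.bilinear_simps)
  show "a * (b + c) = a * b + a * c" by transfer (rule blinfun_eqI, simp add: blinfun.bilinear_simps)
  show "(0::'a endo) \<noteq> 1"
  proof
    assume "(0::'a endo) = 1"
    then have "norm (0::'a endo) = norm (1::'a endo)" by simp
    moreover have "norm (1::'a endo) = 1" by transfer simp
    ultimately show False by simp
  qed
  show "r *\<^sub>R a * b = r *\<^sub>R (a * b)" by transfer (rule blinfun_eqI, simp add: blinfun.bilinear_simps)
  show "a * r *\<^sub>R b = r *\<^sub>R (a * b)" by transfer (rule blinfun_eqI, simp add: blinfun.bilinear_simps)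
  show "norm (a * b) \<le> norm a * norm b" by transfer (rule norm_blinfun_compose)
  show "norm (1::'a endo) = 1" by transfer simp
qed
end


definition toE :: "real^'n^'n \<Rightarrow> (real^'n) endo" where
  "toE A = Abs_endo (Blinfun (\<lambda>x. A *v x))"

definition fromE :: "(real^'n) endo \<Rightarrow> real^'n^'n" where
  "fromE e = matrix (blinfun_apply (Rep_endo e))"

lemma Rep_toE: "blinfun_apply (Rep_endo (toE A)) = (\<lambda>x. A *v x)"
  unfolding toE_def by (simp add: Abs_endo_inverse bounded_linear_Blinfun_apply)

lemma fromE_toE[simp]: "fromE (toE A) = A"
  unfolding fromE_def Rep_toE by simp

lemma toE_fromE[simp]: "toE (fromE e) = e"
proof -
  have "(\<lambda>x. fromE e *v x) = blinfun_apply (Rep_endo e)"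
    unfolding fromE_def by (rule matrix_vector_mul(3)) (rule blinfun.bounded_linear_right)
  then have "Blinfun (\<lambda>x. fromE e *v x) = Rep_endo e"
    by (simp add: blinfun_apply_inverse)
  then show ?thesis unfolding toE_def by (simp add: Rep_endo_inverse)
qed

lemma toE_inj: "toE A = toE B \<Longrightarrow> A = B"
  by (metis fromE_toE)

lemma toE_mult: "toE (A ** B) = toE A * toE B"
proof -
  have "Rep_endo (toE (A ** B)) = Rep_endo (toE A) o\<^sub>L Rep_endo (toE B)"
    by (rule blinfun_eqI) (simp add: Rep_toE matrix_vector_mul_assoc)
  then show ?thesis by (metis Rep_endo_inverse times_endo.rep_eq)
qed

lemma toE_one: "toE (mat 1) = 1"
proof -
  have "Rep_endo (toE (mat 1 :: real^'n^'n)) = id_blinfun"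
    by (rule blinfun_eqI) (simp add: Rep_toE)
  then show ?thesis by (metis Rep_endo_inverse one_endo.rep_eq)
qed

lemma toE_add: "toE (A + B) = toE A + toE B"
proof -
  have "Rep_endo (toE (A + B)) = Rep_endo (toE A) + Rep_endo (toE B)"
    by (rule blinfun_eqI) (simp add: Rep_toE blinfun.bilinear_simps matrix_vector_mult_add_rdistrib)
  then show ?thesis by (metis Rep_endo_inverse plus_endo.rep_eq)
qed

lemma toE_scaleR: "toE (r *\<^sub>R A) = r *\<^sub>R toE A"
proof -
  have "Rep_endo (toE (r *\<^sub>R A)) = r *\<^sub>R Rep_endo (toE A)"
    by (rule blinfun_eqI) (simp add: Rep_toE blinfun.bilinear_simps vec_eq_iff matrix_vector_mult_def sum_distrib_left algebra_simps)
  then show ?thesis by (metis Rep_endo_inverse scaleR_endo.rep_eq)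
qed

lemma toE_mpow: "toE (mpow X k) = toE X ^ k"
  by (induction k) (simp_all add: toE_one toE_mult)

lemma fromE_entry: "fromE e $ i $ j = Rep_endo e (axis j 1) $ i"
  by (simp add: fromE_def matrix_def)

lemma fromE_add: "fromE (a + b) = fromE a + fromE b"
  by (simp add: vec_eq_iff fromE_entry plus_endo.rep_eq blinfun.bilinear_simps)

lemma fromE_scaleR: "fromE (r *\<^sub>R a) = r *\<^sub>R fromE a"
  by (simp add: vec_eq_iff fromE_entry scaleR_endo.rep_eq blinfun.bilinear_simps)

lemma fromE_bl: "bounded_linear (fromE :: (real^'n) endo \<Rightarrow> real^'n^'n)"
proof (rule bounded_linear_intro[where K = "real (CARD('n)) * real (CARD('n))"])
  fix a b :: "(real^'n) endo" and r :: real
  show "fromE (a + b) = fromE a + fromE b" by (rule fromE_add)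
  show "fromE (r *\<^sub>R a) = r *\<^sub>R fromE a" by (rule fromE_scaleR)
  have ent: "\<bar>fromE a $ i $ j\<bar> \<le> norm a" for i j
  proof -
    have "\<bar>fromE a $ i $ j\<bar> \<le> norm (Rep_endo a (axis j 1))"
      unfolding fromE_entry by (rule component_le_norm_cart)
    also have "\<dots> \<le> norm (Rep_endo a) * norm (axis j (1::real))" by (rule norm_blinfun)
    also have "\<dots> = norm a" by (simp add: norm_Rep_endo)
    finally show ?thesis .
  qed
  have row: "norm (fromE a $ i) \<le> real (CARD('n)) * norm a" for i
  proof -
    have "norm (fromE a $ i) \<le> (\<Sum>j\<in>UNIV. \<bar>fromE a $ i $ j\<bar>)" by (rule norm_le_l1_cart)
    also have "\<dots> \<le> (\<Sum>j\<in>(UNIV::'n set). norm a)" by (rule sum_mono) (rule ent)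
    finally show ?thesis by simp
  qed
  have "norm (fromE a) \<le> (\<Sum>i\<in>UNIV. norm (fromE a $ i))"
    unfolding norm_vec_def by (rule L2_set_le_sum) simp
  also have "\<dots> \<le> (\<Sum>i\<in>(UNIV::'n set). real (CARD('n)) * norm a)" by (rule sum_mono) (rule row)
  finally show "norm (fromE a) \<le> norm a * (real (CARD('n)) * real (CARD('n)))" by (simp add: algebra_simps)
qed

lemma mexp_sums: "(\<lambda>k. (1 / fact k) *\<^sub>R mpow X k) sums fromE (exp (toE X))"
proof -
  have "(\<lambda>k. toE X ^ k /\<^sub>R fact k) sums exp (toE X)"
    unfolding exp_def using summable_exp_generic by (rule summable_sums)
  from bounded_linear.sums[OF fromE_bl this]
  have "(\<lambda>k. fromE (toE X ^ k /\<^sub>R fact k)) sums fromE (exp (toE X))" .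
  moreover have "fromE (toE X ^ k /\<^sub>R fact k) = (1 / fact k) *\<^sub>R mpow X k" for k
    by (simp add: fromE_scaleR toE_mpow[symmetric] divide_inverse)
  ultimately show ?thesis by simp
qed

lemma mexp_eq: "mexp X = fromE (exp (toE X))"
  unfolding mexp_def using mexp_sums by (rule sums_unique[symmetric])

lemma toE_mexp: "toE (mexp X) = exp (toE X)"
  by (simp add: mexp_eq)

lemma mexp_invertible: "invertible (mexp X)"
proof -
  have "toE (mexp X ** mexp (-X)) = 1"
    by (simp add: toE_mult toE_mexp toE_scaleR[of "-1", simplified] exp_add_commuting[symmetric])
  then have a: "mexp X ** mexp (-X) = mat 1" by (metis toE_inj toE_one)
  have "toE (mexp (-X) ** mexp X) = 1"
    by (simp add: toE_mult toE_mexp toE_scaleR[of "-1", simplified] exp_add_commuting[symmetric])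
  then have b: "mexp (-X) ** mexp X = mat 1" by (metis toE_inj toE_one)
  show ?thesis unfolding invertible_def using a b by blast
qed

lemma sym_inner:
  fixes X :: "real^'n^'n"
  assumes "transpose X = X"
  shows "(X *v u) \<bullet> w = u \<bullet> (X *v w)"
proof -
  have "X *v u = u v* X" by (metis assms transpose_matrix_vector)
  then show ?thesis by (simp add: dot_lmul_matrix)
qed

lemma eigenspace_subspace: "subspace (eigenspace X l)"
  unfolding subspace_def eigenspace_def
  by (auto simp: matrix_vector_right_distrib matrix_vector_mult_scaleR algebra_simps)

lemma orth_of_closest0:
  fixes X :: "real^'n^'n"
  assumes "closest_point (eigenspace X l) v = 0" "X *v u = l *\<^sub>R u"
  shows "v \<bullet> u = 0"
proof -
  let ?S = "eigenspace X l"
  have sub: "subspace ?S" by (rule eigenspace_subspace)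
  have cl: "closed ?S" using sub by (rule closed_subspace)
  have cv: "convex ?S" using sub by (rule subspace_imp_convex)
  have z: "0 \<in> ?S" using sub by (rule subspace_0)
  have uS: "u \<in> ?S" using assms(2) by (simp add: eigenspace_def)
  have muS: "- u \<in> ?S" using sub uS by (rule subspace_neg)
  have all: "\<forall>y\<in>?S. dist v 0 \<le> dist v y"
    using closest_point_exists(2)[OF cl, of v] z assms(1) by auto
  have "inner (v - 0) (u - 0) \<le> 0" by (rule any_closest_point_dot[OF cv cl z uS all])
  moreover have "inner (v - 0) (-u - 0) \<le> 0" by (rule any_closest_point_dot[OF cv cl z muS all])
  ultimately show ?thesis by simp
qed

lemma supp_eig_nonempty:
  fixes X :: "real^'n^'n"
  assumes sym: "transpose X = X" and v: "v \<noteq> 0"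
  shows "supp_eig X v \<noteq> {}"
proof
  assume emp: "supp_eig X v = {}"
  define W where "W = {w. \<forall>l u. X *v u = l *\<^sub>R u \<longrightarrow> w \<bullet> u = 0}"
  have vW: "v \<in> W"
  proof -
    have "v \<bullet> u = 0" if "X *v u = l *\<^sub>R u" for l u
    proof (cases "u = 0")
      case True then show ?thesis by simp
    next
      case False
      then have "closest_point (eigenspace X l) v = 0"
        using emp that unfolding supp_eig_def by blast
      then show ?thesis using orth_of_closest0 that by blast
    qed
    then show ?thesis unfolding W_def by blast
  qed
  have subW: "subspace W"
    unfolding subspace_def W_def by (fastforce simp: inner_add_left)
  have invW: "X *v w \<in> W" if "w \<in> W" for w
  proof -
    have "(X *v w) \<bullet> u = 0" if "X *v u = l *\<^sub>R u" for l u
    proof -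
      have "(X *v w) \<bullet> u = w \<bullet> (X *v u)" by (rule sym_inner[OF sym])
      also have "\<dots> = l * (w \<bullet> u)" using that by simp
      also have "w \<bullet> u = 0" using \<open>w \<in> W\<close> that unfolding W_def by blast
      finally show ?thesis by simp
    qed
    then show ?thesis unfolding W_def by blast
  qed
  define q where "q = (\<lambda>w. (X *v w) \<bullet> w)"
  define K where "K = W \<inter> sphere 0 1"
  have cK: "compact K" unfolding K_def
    using closed_subspace[OF subW] compact_sphere by (metis compact_Int_closed inf_commute)
  have neK: "K \<noteq> {}"
  proof -
    have "v /\<^sub>R norm v \<in> K" using v vW subW unfolding K_def
      by (simp add: subspace_scale)
    then show ?thesis by blast
  qed
  have cq: "continuous_on K q" unfolding q_def
    by (intro continuous_intros bounded_linear.continuous_on[OF matrix_vector_mul_bounded_linear])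
  obtain w0 where w0K: "w0 \<in> K" and w0max: "\<And>y. y \<in> K \<Longrightarrow> q y \<le> q w0"
    using continuous_attains_sup[OF cK neK cq] by blast
  define a where "a = q w0"
  have w0W: "w0 \<in> W" and nw0: "norm w0 = 1" using w0K by (auto simp: K_def)
  have w0w0: "w0 \<bullet> w0 = 1" using nw0 by (simp add: dot_square_norm)
  have qhom: "q (c *\<^sub>R w) = c\<^sup>2 * q w" for c w
    by (simp add: q_def matrix_vector_mult_scaleR power2_eq_square)
  have bound: "q w \<le> a * (w \<bullet> w)" if "w \<in> W" for w
  proof (cases "w = 0")
    case True then show ?thesis by (simp add: q_def)
  next
    case False
    define c where "c = inverse (norm w)"
    have cw: "c *\<^sub>R w \<in> K" using that False subW
      by (simp add: K_def c_def subspace_scale)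
    have "c\<^sup>2 * q w \<le> a" using w0max[OF cw] qhom by (simp add: a_def)
    moreover have "c\<^sup>2 * (w \<bullet> w) = 1" using False
      by (simp add: c_def dot_square_norm power2_eq_square field_simps)
    moreover have "c\<^sup>2 > 0" using False by (simp add: c_def)
    ultimately have "c\<^sup>2 * q w \<le> c\<^sup>2 * (a * (w \<bullet> w))" by (simp add: algebra_simps)
    then show ?thesis using \<open>c\<^sup>2 > 0\<close> by simp
  qed
  define z where "z = X *v w0 - a *\<^sub>R w0"
  have zW: "z \<in> W" unfolding z_def using subW invW[OF w0W] w0W
    by (simp add: subspace_diff subspace_scale)
  have zw0: "z \<bullet> w0 = 0" by (simp add: z_def inner_diff_left w0w0 a_def q_def)
  define N where "N = z \<bullet> z"
  define c where "c = a * N - q z"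
  have key: "2 * s * N \<le> s\<^sup>2 * c" for s
  proof -
    have wW: "w0 + s *\<^sub>R z \<in> W" using subW w0W zW by (simp add: subspace_add subspace_scale)
    have e1: "q (w0 + s *\<^sub>R z) = a + 2 * s * N + s\<^sup>2 * q z"
    proof -
      have xz: "(X *v z) \<bullet> w0 = z \<bullet> (X *v w0)" by (rule sym_inner[OF sym])
      have xw: "X *v w0 = z + a *\<^sub>R w0" by (simp add: z_def)
      have mv: "X *v (w0 + s *\<^sub>R z) = X *v w0 + s *\<^sub>R (X *v z)"
        by (simp add: matrix_vector_right_distrib matrix_vector_mult_scaleR)
      have ex: "(X *v w0 + s *\<^sub>R (X *v z)) \<bullet> (w0 + s *\<^sub>R z)
          = (X *v w0) \<bullet> w0 + s * ((X *v w0) \<bullet> z) + s * ((X *v z) \<bullet> w0) + s * s * ((X *v z) \<bullet> z)"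
        by (simp only: inner_add_left inner_add_right inner_scaleR_left inner_scaleR_right) (simp add: algebra_simps)
      have t1: "(X *v w0) \<bullet> w0 = a" by (simp add: a_def q_def)
      have t2: "(X *v w0) \<bullet> z = N" unfolding xw
        by (simp add: inner_add_left inner_add_right inner_scaleR_right N_def zw0 inner_commute[of w0 z])
      have t3: "(X *v z) \<bullet> w0 = N" using xz t2 by (simp add: inner_commute)
      have t4: "(X *v z) \<bullet> z = q z" by (simp add: q_def)
      have "q (w0 + s *\<^sub>R z) = (X *v (w0 + s *\<^sub>R z)) \<bullet> (w0 + s *\<^sub>R z)"
        by (simp only: q_def)
      also have "\<dots> = a + s * N + s * N + s * s * q z" unfolding mv ex t1 t2 t3 t4 ..
      also have "\<dots> = a + 2 * s * N + s\<^sup>2 * q z" by (simp add: power2_eq_square)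
      finally show ?thesis .
    qed
    have e2: "(w0 + s *\<^sub>R z) \<bullet> (w0 + s *\<^sub>R z) = 1 + s\<^sup>2 * N"
    proof -
      have zw0': "w0 \<bullet> z = 0" using zw0 by (simp add: inner_commute)
      show ?thesis by (simp add: inner_add_left inner_add_right w0w0 zw0 zw0' N_def power2_eq_square)
    qed
    from bound[OF wW] show ?thesis unfolding e1 e2 c_def by (simp add: algebra_simps)
  qed
  have N0: "N \<ge> 0" by (simp add: N_def)
  have "N = 0"
  proof (rule ccontr)
    assume "N \<noteq> 0"
    then have Np: "N > 0" using N0 by simp
    define s where "s = N / (\<bar>c\<bar> + 1)"
    have sp: "s > 0" using Np by (simp add: s_def add_pos_nonneg)
    have "2 * s * N \<le> s\<^sup>2 * c" by (rule key)
    then have "2 * N \<le> s * c" using sp by (simp add: power2_eq_square mult.assoc)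
    moreover have "s * c < N"
    proof -
      have "s * c = N * (c / (\<bar>c\<bar> + 1))" by (simp add: s_def)
      also have "c / (\<bar>c\<bar> + 1) < 1" using abs_ge_self[of c] by (simp add: divide_less_eq add_pos_nonneg)
      then have "N * (c / (\<bar>c\<bar> + 1)) < N * 1" using Np by (intro mult_strict_left_mono)
      finally show ?thesis by simp
    qed
    ultimately show False using Np by simp
  qed
  then have "z = 0" by (simp add: N_def)
  then have "X *v w0 = a *\<^sub>R w0" by (simp add: z_def)
  then have "w0 \<bullet> w0 = 0" using w0W unfolding W_def by blast
  then show False using w0w0 by simp
qed

lemma eigvals_finite:
  fixes X :: "real^'n^'n"
  assumes sym: "transpose X = X"
  shows "finite {l. \<exists>w. w \<noteq> 0 \<and> X *v w = l *\<^sub>R w}"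
proof -
  define S where "S = {l. \<exists>w. w \<noteq> 0 \<and> X *v w = l *\<^sub>R w}"
  define ev where "ev = (\<lambda>l. SOME w. w \<noteq> 0 \<and> X *v w = l *\<^sub>R w)"
  have evp: "ev l \<noteq> 0 \<and> X *v ev l = l *\<^sub>R ev l" if "l \<in> S" for l
  proof -
    from that obtain w where "w \<noteq> 0 \<and> X *v w = l *\<^sub>R w" unfolding S_def by blast
    then show ?thesis unfolding ev_def by (rule someI)
  qed
  have inj: "inj_on ev S"
  proof (rule inj_onI)
    fix l l' assume l: "l \<in> S" and l': "l' \<in> S" and e: "ev l = ev l'"
    have "l *\<^sub>R ev l = X *v ev l" using evp[OF l] by simp
    also have "\<dots> = l' *\<^sub>R ev l" using evp[OF l'] e by simp
    finally have "l *\<^sub>R ev l = l' *\<^sub>R ev l" .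
    then show "l = l'" using evp[OF l] by simp
  qed
  have po: "pairwise orthogonal (ev ` S)"
    unfolding pairwise_def
  proof (intro ballI impI)
    fix x y assume x: "x \<in> ev ` S" and y: "y \<in> ev ` S" and ne: "x \<noteq> y"
    obtain l where l: "l \<in> S" and xl: "x = ev l" using x by blast
    obtain l' where l': "l' \<in> S" and yl: "y = ev l'" using y by blast
    have ll: "l \<noteq> l'" using ne xl yl by blast
    have "l * (x \<bullet> y) = (X *v x) \<bullet> y" using evp[OF l] xl by simp
    also have "\<dots> = x \<bullet> (X *v y)" by (rule sym_inner[OF sym])
    also have "\<dots> = l' * (x \<bullet> y)" using evp[OF l'] yl by simp
    finally have "(l - l') * (x \<bullet> y) = 0" by (simp add: algebra_simps)
    then show "orthogonal x y" using ll by (simp add: orthogonal_def)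
  qed
  have "0 \<notin> ev ` S"
  proof
    assume "0 \<in> ev ` S"
    then obtain l where "l \<in> S" "ev l = 0" by (metis imageE)
    then show False using evp by blast
  qed
  then have "independent (ev ` S)" using po by (intro pairwise_orthogonal_independent)
  then have "finite (ev ` S)" using independent_bound by blast
  then have "finite S" using inj finite_imageD by blast
  then show ?thesis by (simp add: S_def)
qed

lemma minus_mv: "(- X) *v w = - (X *v (w::real^'n))" for X :: "real^'n^'m"
  unfolding vec_eq_iff matrix_vector_mult_def
proof
  fix i show "(\<chi> i. \<Sum>j\<in>UNIV. (- X) $ i $ j * w $ j) $ i = (- (\<chi> i. \<Sum>j\<in>UNIV. X $ i $ j * w $ j)) $ i"
    by (simp add: sum_negf[symmetric])
qed

lemma supp_eig_neg: "supp_eig (- X) v = uminus ` supp_eig X v"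
proof -
  have ev: "(- X) *v w = l *\<^sub>R w \<longleftrightarrow> X *v w = (- l) *\<^sub>R w" for w l
    using minus_equation_iff[of "X *v w" "l *\<^sub>R w"] by (simp add: minus_mv eq_commute)
  have es: "eigenspace (- X) l = eigenspace X (- l)" for l
    unfolding eigenspace_def ev ..
  have mem: "l \<in> supp_eig (- X) v \<longleftrightarrow> - l \<in> supp_eig X v" for l
    unfolding supp_eig_def es mem_Collect_eq ev ..
  show ?thesis
  proof (rule set_eqI)
    fix l
    have "l \<in> uminus ` supp_eig X v \<longleftrightarrow> - l \<in> supp_eig X v"
    proof
      assume "l \<in> uminus ` supp_eig X v"
      then obtain m where "m \<in> supp_eig X v" "l = - m" by blast
      then show "- l \<in> supp_eig X v" by simp
    next
      assume "- l \<in> supp_eig X v"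
      then have "- (- l) \<in> uminus ` supp_eig X v" by (rule imageI)
      then show "l \<in> uminus ` supp_eig X v" by simp
    qed
    then show "l \<in> supp_eig (- X) v \<longleftrightarrow> l \<in> uminus ` supp_eig X v" using mem by simp
  qed
qed

lemma mpow_in:
  assumes "GL_subgroup G" "A \<in> G"
  shows "mpow A k \<in> G"
  using assms by (induction k) (auto simp: GL_subgroup_def)

lemma mexp_zero: "mexp (0::real^'n^'n) = mat 1"
proof -
  have "toE (0::real^'n^'n) = 0" using toE_scaleR[of 0 "0::real^'n^'n"] by simp
  have "mexp (0::real^'n^'n) = fromE (exp (toE 0))" by (rule mexp_eq)
  also have "\<dots> = fromE (toE (mat 1))" using \<open>toE 0 = 0\<close> by (simp add: toE_one)
  finally show ?thesis by simp
qed

lemma lie_zero: "GL_subgroup G \<Longrightarrow> 0 \<in> lie_alg G"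
  by (simp add: lie_alg_def mexp_zero GL_subgroup_def)

lemma lie_scale: "X \<in> lie_alg G \<Longrightarrow> c *\<^sub>R X \<in> lie_alg G"
  unfolding lie_alg_def by (simp add: scaleR_scaleR)

lemma lie_add:
  fixes G :: "(real^'n^'n) set"
  assumes sg: "GL_subgroup G"
    and cl: "closedin (top_of_set {A :: real^'n^'n. invertible A}) G"
    and X: "X \<in> lie_alg G" and Y: "Y \<in> lie_alg G"
  shows "X + Y \<in> lie_alg G"
  unfolding lie_alg_def
proof (intro CollectI allI)
  fix t :: real
  define A where "A = toE (t *\<^sub>R X)"
  define B where "B = toE (t *\<^sub>R Y)"
  define h where "h = (\<lambda>k::nat. inverse (real (Suc k)))"
  define M where "M = (\<lambda>k. mexp ((h k * t) *\<^sub>R X) ** mexp ((h k * t) *\<^sub>R Y))"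
  have MG: "M k \<in> G" for k
    using X Y sg unfolding M_def lie_alg_def GL_subgroup_def by blast
  have tM: "toE (M k) = exp (h k *\<^sub>R A) * exp (h k *\<^sub>R B)" for k
    by (simp add: M_def A_def B_def toE_mult toE_mexp toE_scaleR)
  have "(\<lambda>k. (exp (h k *\<^sub>R A) * exp (h k *\<^sub>R B)) ^ Suc k) \<longlonglongrightarrow> exp (A + B)"
    unfolding h_def by (rule trotter)
  from bounded_linear.tendsto[OF fromE_bl this]
  have lim: "(\<lambda>k. mpow (M k) (Suc k)) \<longlonglongrightarrow> mexp (t *\<^sub>R (X + Y))"
  proof -
    assume a: "(\<lambda>k. fromE ((exp (h k *\<^sub>R A) * exp (h k *\<^sub>R B)) ^ Suc k)) \<longlonglongrightarrow> fromE (exp (A + B))"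
    have "fromE ((exp (h k *\<^sub>R A) * exp (h k *\<^sub>R B)) ^ Suc k) = mpow (M k) (Suc k)" for k
      by (metis fromE_toE tM toE_mpow)
    moreover have "fromE (exp (A + B)) = mexp (t *\<^sub>R (X + Y))"
      by (simp add: mexp_eq A_def B_def toE_add scaleR_right_distrib)
    ultimately show ?thesis using a by simp
  qed
  obtain C where C: "closed C" "G = {A. invertible A} \<inter> C"
    using cl closedin_closed by blast
  have "mexp (t *\<^sub>R (X + Y)) \<in> C"
    using closed_sequentially[OF C(1) _ lim] mpow_in[OF sg MG] C(2) by blast
  then show "mexp (t *\<^sub>R (X + Y)) \<in> G" using C(2) mexp_invertible by blast
qed

lemma mpow_commute: "mpow Z k ** Z = Z ** mpow Z k"
  by (rule toE_inj) (simp add: toE_mult toE_mpow power_commutes)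

lemma mpow_transpose: "transpose (mpow Z k) = mpow (transpose Z) k"
proof (induction k)
  case 0 then show ?case by (simp add: transpose_mat)
next
  case (Suc k)
  have "transpose (mpow Z (Suc k)) = transpose (mpow Z k) ** transpose Z"
    by (simp add: matrix_transpose_mul)
  also have "\<dots> = mpow (transpose Z) k ** transpose Z" using Suc by simp
  also have "\<dots> = mpow (transpose Z) (Suc k)" by (simp add: mpow_commute)
  finally show ?case .
qed

lemma transpose_bl: "bounded_linear (transpose :: real^'n^'m \<Rightarrow> real^'m^'n)"
proof -
  have "linear (transpose :: real^'n^'m \<Rightarrow> real^'m^'n)"
    by (rule linearI) (simp_all add: transpose_def vec_eq_iff)
  then show ?thesis by (simp add: linear_conv_bounded_linear)
qed

lemma transpose_scaleR: "transpose (c *\<^sub>R A) = c *\<^sub>R transpose (A::real^'n^'m)"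
  by (simp add: transpose_def vec_eq_iff)

lemma mexp_transpose: "mexp (transpose Z) = transpose (mexp (Z::real^'n^'n))"
proof -
  have s: "(\<lambda>k. (1 / fact k) *\<^sub>R mpow Z k) sums mexp Z"
    using mexp_sums[of Z, folded mexp_eq] .
  from bounded_linear.sums[OF transpose_bl s]
  have "(\<lambda>k. (1 / fact k) *\<^sub>R mpow (transpose Z) k) sums transpose (mexp Z)"
    by (simp add: transpose_scaleR mpow_transpose)
  moreover have "(\<lambda>k. (1 / fact k) *\<^sub>R mpow (transpose Z) k) sums mexp (transpose Z)"
    using mexp_sums[of "transpose Z", folded mexp_eq] .
  ultimately show ?thesis by (rule sums_unique2[symmetric])
qed

lemma lie_transpose:
  assumes "\<forall>A\<in>G. transpose A \<in> G" "X \<in> lie_alg G"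
  shows "transpose X \<in> lie_alg G"
  unfolding lie_alg_def
proof (intro CollectI allI)
  fix t :: real
  have "mexp (t *\<^sub>R X) \<in> G" using assms(2) unfolding lie_alg_def by blast
  then have "transpose (mexp (t *\<^sub>R X)) \<in> G" using assms(1) by blast
  then show "mexp (t *\<^sub>R transpose X) \<in> G" by (simp only: transpose_scaleR[symmetric] mexp_transpose)
qed

lemma minner_sum: "minner A B = (\<Sum>i\<in>UNIV. \<Sum>j\<in>UNIV. A$i$j * B$i$j)"
  unfolding minner_def trace_def by (simp add: matrix_matrix_mult_def transpose_def)

lemma sym_of_Ptilde:
  fixes G :: "(real^'n^'n) set"
  assumes sg: "GL_subgroup G"
    and cl: "closedin (top_of_set {A :: real^'n^'n. invertible A}) G"
    and tr: "\<forall>A\<in>G. transpose A \<in> G"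
    and X: "X \<in> P_tilde G v"
  shows "transpose X = X"
proof -
  have XL: "X \<in> lie_alg G" using X by (simp add: P_tilde_def)
  define K where "K = X + (-1) *\<^sub>R transpose X"
  have KL: "K \<in> lie_alg G" unfolding K_def
    by (intro lie_add[OF sg cl] XL lie_scale lie_transpose[OF tr])
  have Kt: "transpose K = - K" by (simp add: K_def transpose_def vec_eq_iff)
  have KK: "K \<in> lie_K G" using KL Kt by (simp add: lie_K_def)
  have HH: "0 \<in> lie_stab G v" using lie_zero[OF sg] by (simp add: lie_stab_def)
  have "minner X (K + 0) = 0" using X KK HH unfolding P_tilde_def by blast
  then have m0: "(\<Sum>i\<in>UNIV. \<Sum>j\<in>UNIV. X$i$j * (X$i$j - X$j$i)) = 0"
    by (simp add: minner_sum K_def transpose_def)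
  define f where "f = (\<lambda>i j. X$i$j * (X$i$j - X$j$i))"
  have "(\<Sum>i\<in>UNIV. \<Sum>j\<in>UNIV. (X$i$j - X$j$i)\<^sup>2) = (\<Sum>i\<in>UNIV. \<Sum>j\<in>UNIV. f i j + f j i)"
    by (intro sum.cong refl) (simp add: f_def power2_eq_square algebra_simps)
  also have "\<dots> = (\<Sum>i\<in>UNIV. \<Sum>j\<in>UNIV. f i j) + (\<Sum>i\<in>UNIV. \<Sum>j\<in>UNIV. f j i)"
    by (simp add: sum.distrib)
  also have "(\<Sum>i\<in>UNIV. \<Sum>j\<in>UNIV. f j i) = (\<Sum>i\<in>UNIV. \<Sum>j\<in>UNIV. f i j)"
    by (rule sum.swap)
  finally have sq: "(\<Sum>i\<in>UNIV. \<Sum>j\<in>UNIV. (X$i$j - X$j$i)\<^sup>2) = 0"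
    using m0 by (simp add: f_def)
  have "X$i$j = X$j$i" for i j
  proof -
    have inner0: "(\<Sum>j\<in>UNIV. (X$i$j - X$j$i)\<^sup>2) = 0" for i
    proof -
      have "\<forall>i\<in>UNIV. (\<Sum>j\<in>UNIV. (X$i$j - X$j$i)\<^sup>2) = 0"
        using sq by (subst sum_nonneg_eq_0_iff[symmetric]) (auto intro: sum_nonneg)
      then show ?thesis by blast
    qed
    have "\<forall>j\<in>UNIV. (X$i$j - X$j$i)\<^sup>2 = 0"
      using inner0[of i] by (subst sum_nonneg_eq_0_iff[symmetric]) auto
    then show ?thesis by simp
  qed
  then show ?thesis by (simp add: transpose_def vec_eq_iff)
qed

lemma Min_uminus:
  fixes S :: "real set"
  assumes "finite S" "S \<noteq> {}"
  shows "Min (uminus ` S) = - Max S"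
proof (rule antisym)
  have "Max S \<in> S" using assms by simp
  then show "Min (uminus ` S) \<le> - Max S" using assms by (intro Min_le) auto
next
  have "Min (uminus ` S) \<in> uminus ` S" using assms by (intro Min_in) auto
  then obtain s where s: "s \<in> S" "Min (uminus ` S) = - s" by blast
  have "s \<le> Max S" using assms s by simp
  then show "- Max S \<le> Min (uminus ` S)" using s by simp
qed

theorem proposition2p6:
  fixes G :: "(real^'n^'n) set" and v :: "real^'n"
  assumes "GL_subgroup G"
    and "closedin (top_of_set {A :: real^'n^'n. invertible A}) G"
    and "connected G"
    and "\<forall>A\<in>G. transpose A \<in> G"
    and "\<not> compact G"
    and "v \<noteq> 0"
  shows "lambda_minus G v \<ge> - HM G v"
  unfolding lambda_minus_def
proof (rule Inf_greatest, clarify)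
  fix X assume XP: "X \<in> P_tilde G v" and nX: "mnorm X = 1"
  have sym: "transpose X = X" by (rule sym_of_Ptilde[OF assms(1,2,4) XP])
  have XL: "X \<in> lie_alg G" using XP by (simp add: P_tilde_def)
  have mXP: "- X \<in> lie_P G"
  proof -
    have "(-1) *\<^sub>R X \<in> lie_alg G" by (rule lie_scale[OF XL])
    moreover have "transpose (- X) = - X" using sym by (simp add: transpose_def vec_eq_iff)
    ultimately show ?thesis by (simp add: lie_P_def)
  qed
  have nmX: "mnorm (- X) = 1" using nX by (simp add: mnorm_def minner_sum)
  have "ereal (mu_X (- X) v) \<le> HM G v"
    unfolding HM_def by (rule Sup_upper) (use mXP nmX in blast)
  moreover have "mu_X (- X) v = - lambda_X X v"
  proof -
    have fin: "finite (supp_eig X v)"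
      by (rule finite_subset[OF _ eigvals_finite[OF sym]]) (auto simp: supp_eig_def)
    have ne: "supp_eig X v \<noteq> {}" by (rule supp_eig_nonempty[OF sym assms(6)])
    show ?thesis unfolding mu_X_def lambda_X_def supp_eig_neg by (rule Min_uminus[OF fin ne])
  qed
  ultimately have "ereal (- lambda_X X v) \<le> HM G v" by simp
  then have "- HM G v \<le> - ereal (- lambda_X X v)" by (subst ereal_minus_le_minus)
  moreover have "- ereal (- lambda_X X v) = ereal (lambda_X X v)" by simp
  ultimately show "- HM G v \<le> ereal (lambda_X X v)" by simp
qed

end
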